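(* Let $C_{BZ}\subset V_{BZ}$ be the cone of BZ labellings with all nine coordinates nonnegative. Then $C_{BZ}$ has exactly eight extreme rays, spanned by the eight fundamental BZ triangles $\hat C_1,\hat C_2,\hat C_3,\hat D_1,\hat D_3,\hat D_5,\hat P,\hat Q$; these eight vectors generate the lattice $\Lambda_{BZ}$ as an abelian group, and the only linear relation among them (up to scaling) is $\hat D_1+\hat D_3+\hat D_5=\hat P+\hat Q$. The group $G_{BZ}$ of all group automorphisms of $\Lambda_{BZ}$ mapping the set of BZ triangles onto itself has order $72$; restriction to the fundamental BZ triangles identifies $G_{BZ}$ with the group of permutations of these eight vectors that map each of $\{\hat C_1,\hat C_2,\hat C_3\}$, $\{\hat D_1,\hat D_3,\hat D_5\}$, $\{\hat P,\hat Q\}$ to itself, so $G_{BZ}\cong\mathfrak{S}_3\times\mathfrak{S}_3\times\mathfrak{S}_2$.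
   Context: A BZ labelling is a vector $(y_1,y_2,y_3,z_1,\dots,z_6)\in\mathbb{R}^9$ satisfying $z_1-z_4=z_5-z_2=z_3-z_6$; these form a 7-dimensional subspace $V_{BZ}\subset\mathbb{R}^9$. Let $\Lambda_{BZ}=V_{BZ}\cap\mathbb{Z}^9$. A BZ triangle ($SU(3)$ Berenstein–Zelevinsky triangle) is an element of $\Lambda_{BZ}$ with all coordinates nonnegative. The fundamental BZ triangles are: $\hat C_i$ ($i=1,2,3$) with $y_i=1$ and all other coordinates $0$; $\hat D_1$ with $z_1=z_4=1$, others $0$; $\hat D_3$ with $z_3=z_6=1$, others $0$; $\hat D_5$ with $z_2=z_5=1$, others $0$; $\hat P$ with $z_1=z_3=z_5=1$, others $0$; $\hat Q$ with $z_2=z_4=z_6=1$, others $0$. *)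

theory Defs
  imports "HOL-Analysis.Analysis"
begin

text \<open>Coordinates of a vector x :: real^9 in the order
  (y1,y2,y3,z1,z2,z3,z4,z5,z6) = (x$1,...,x$9).\<close>

definition V_BZ :: "(real^9) set" where
  "V_BZ = {x. x$4 - x$7 = x$8 - x$5 \<and> x$8 - x$5 = x$6 - x$9}"

definition Lambda_BZ :: "(real^9) set" where
  "Lambda_BZ = {x \<in> V_BZ. \<forall>i. x$i \<in> \<int>}"

definition C_BZ :: "(real^9) set" where
  "C_BZ = {x \<in> V_BZ. \<forall>i. 0 \<le> x$i}"

definition BZ_triangles :: "(real^9) set" where
  "BZ_triangles = {x \<in> Lambda_BZ. \<forall>i. 0 \<le> x$i}"

definition C1 :: "real^9" where "C1 = axis 1 1"
definition C2 :: "real^9" where "C2 = axis 2 1"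
definition C3 :: "real^9" where "C3 = axis 3 1"
definition D1 :: "real^9" where "D1 = axis 4 1 + axis 7 1"
definition D3 :: "real^9" where "D3 = axis 6 1 + axis 9 1"
definition D5 :: "real^9" where "D5 = axis 5 1 + axis 8 1"
definition P  :: "real^9" where "P = axis 4 1 + axis 6 1 + axis 8 1"
definition Q  :: "real^9" where "Q = axis 5 1 + axis 7 1 + axis 9 1"

definition fund :: "nat \<Rightarrow> real^9" where
  "fund i = [C1, C2, C3, D1, D3, D5, P, Q] ! i"

text \<open>Coefficients of the relation D1 + D3 + D5 - P - Q = 0.\<close>
definition rel_coeff :: "nat \<Rightarrow> real" where
  "rel_coeff i = [0, 0, 0, 1, 1, 1, -1, -1] ! i"

definition ray :: "real^9 \<Rightarrow> (real^9) set" where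
  "ray v = {t *\<^sub>R v | t. 0 \<le> t}"

definition extreme_ray_of :: "(real^9) set \<Rightarrow> (real^9) set \<Rightarrow> bool" where
  "extreme_ray_of R K \<longleftrightarrow> (\<exists>v. v \<noteq> 0 \<and> R = ray v) \<and> R face_of K"

definition G_BZ :: "(real^9 \<Rightarrow> real^9) set" where
  "G_BZ = {f. f \<in> extensional Lambda_BZ \<and> bij_betw f Lambda_BZ Lambda_BZ
              \<and> (\<forall>x\<in>Lambda_BZ. \<forall>y\<in>Lambda_BZ. f (x + y) = f x + f y)
              \<and> f ` BZ_triangles = BZ_triangles}"

definition block_perms :: "(nat \<Rightarrow> nat) set" where
  "block_perms = {\<sigma>. \<sigma> permutes {..<8} \<and> \<sigma> ` {0,1,2} = {0,1,2}
                     \<and> \<sigma> ` {3,4,5} = {3,4,5} \<and> \<sigma> ` {6,7} = {6,7}}"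

end

theory Submission
  imports Defs
begin

lemma exhaust_9:
  fixes x :: 9
  shows "x = 1 \<or> x = 2 \<or> x = 3 \<or> x = 4 \<or> x = 5 \<or> x = 6 \<or> x = 7 \<or> x = 8 \<or> x = 9"
proof (induct x)
  case (of_int z)
  then have "z = 0 \<or> z = 1 \<or> z = 2 \<or> z = 3 \<or> z = 4 \<or> z = 5 \<or> z = 6 \<or> z = 7 \<or> z = 8" by fastforce
  then show ?case by auto
qed

lemma forall_9: "(\<forall>i::9. Pr i) \<longleftrightarrow> Pr 1 \<and> Pr 2 \<and> Pr 3 \<and> Pr 4 \<and> Pr 5 \<and> Pr 6 \<and> Pr 7 \<and> Pr 8 \<and> Pr 9"
  by (metis exhaust_9)

lemma vec9_eq: "(x::real^9) = y \<longleftrightarrow> x$1 = y$1 \<and> x$2 = y$2 \<and> x$3 = y$3 \<and> x$4 = y$4 \<and> x$5 = y$5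
   \<and> x$6 = y$6 \<and> x$7 = y$7 \<and> x$8 = y$8 \<and> x$9 = y$9"
  by (simp add: vec_eq_iff forall_9)

lemma axis_nth9: "axis k (1::real) $ j = (if j = k then 1 else 0)"
  by (simp add: axis_def)

lemma fund_simps: "fund 0 = C1" "fund 1 = C2" "fund 2 = C3" "fund 3 = D1" "fund 4 = D3"
  "fund 5 = D5" "fund 6 = P" "fund 7 = Q" "fund (Suc 0) = C2"
  by (simp_all add: fund_def eval_nat_numeral)

lemma rel_simps: "rel_coeff 0 = 0" "rel_coeff 1 = 0" "rel_coeff 2 = 0" "rel_coeff 3 = 1" "rel_coeff 4 = 1"
  "rel_coeff 5 = 1" "rel_coeff 6 = -1" "rel_coeff 7 = -1" "rel_coeff (Suc 0) = 0"
  by (simp_all add: rel_coeff_def eval_nat_numeral)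

lemmas vdefs = C1_def C2_def C3_def D1_def D3_def D5_def P_def Q_def

lemma sum8: "(\<Sum>i<8. g i) = g 0 + g 1 + g 2 + g 3 + g 4 + g 5 + g 6 + g 7"
  for g :: "nat \<Rightarrow> 'a::comm_monoid_add"
  by (simp add: eval_nat_numeral lessThan_Suc add_ac)

lemma less8: "(i::nat) < 8 \<longleftrightarrow> i = 0 \<or> i = 1 \<or> i = 2 \<or> i = 3 \<or> i = 4 \<or> i = 5 \<or> i = 6 \<or> i = 7"
  by auto

lemma all8: "(\<forall>i<(8::nat). Pr i) \<longleftrightarrow> Pr 0 \<and> Pr 1 \<and> Pr 2 \<and> Pr 3 \<and> Pr 4 \<and> Pr 5 \<and> Pr 6 \<and> Pr 7"
  unfolding less8 by blast

lemma comb_nth: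
  fixes c :: "nat \<Rightarrow> real"
  defines "x \<equiv> (\<Sum>i<8. c i *\<^sub>R fund i)"
  shows "x$1 = c 0" "x$2 = c 1" "x$3 = c 2" "x$4 = c 3 + c 6" "x$5 = c 5 + c 7"
    "x$6 = c 4 + c 6" "x$7 = c 3 + c 7" "x$8 = c 5 + c 6" "x$9 = c 4 + c 7"
  unfolding x_def sum8 by (simp_all add: fund_simps vdefs axis_nth9)

lemma comb_in_V: "(\<Sum>i<8. c i *\<^sub>R fund i) \<in> V_BZ"
  unfolding V_BZ_def mem_Collect_eq comb_nth by simp

lemma floor_int: "(x::real) \<in> \<int> \<Longrightarrow> of_int \<lfloor>x\<rfloor> = x"
  by (metis Ints_cases floor_of_int)

definition cf :: "real^9 \<Rightarrow> nat \<Rightarrow> real" where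
  "cf x i = [x$1, x$2, x$3, min (x$4) (x$7), min (x$6) (x$9), min (x$5) (x$8),
             max (x$4 - x$7) 0, max (x$7 - x$4) 0] ! i"

lemma cf_simps: "cf x 0 = x$1" "cf x 1 = x$2" "cf x 2 = x$3" "cf x 3 = min (x$4) (x$7)"
  "cf x 4 = min (x$6) (x$9)" "cf x 5 = min (x$5) (x$8)" "cf x 6 = max (x$4 - x$7) 0"
  "cf x 7 = max (x$7 - x$4) 0" "cf x (Suc 0) = x$2"
  by (simp_all add: cf_def eval_nat_numeral)

lemma decomp: "x \<in> V_BZ \<Longrightarrow> x = (\<Sum>i<8. cf x i *\<^sub>R fund i)"
  unfolding vec9_eq comb_nth cf_simps V_BZ_def by auto

lemma cf_nonneg: "x \<in> C_BZ \<Longrightarrow> i < 8 \<Longrightarrow> 0 \<le> cf x i"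
  unfolding C_BZ_def less8 by (auto simp: cf_simps)

lemma cf_int: "x \<in> Lambda_BZ \<Longrightarrow> i < 8 \<Longrightarrow> cf x i \<in> \<int>"
  unfolding Lambda_BZ_def less8 by (auto simp: cf_simps min_def max_def)

lemma Lambda_iff: "x \<in> Lambda_BZ \<longleftrightarrow> (\<exists>c :: nat \<Rightarrow> int. x = (\<Sum>i<8. of_int (c i) *\<^sub>R fund i))"
proof
  assume x: "x \<in> Lambda_BZ"
  then have V: "x \<in> V_BZ" by (simp add: Lambda_BZ_def)
  have "(\<Sum>i<8. of_int \<lfloor>cf x i\<rfloor> *\<^sub>R fund i) = (\<Sum>i<8. cf x i *\<^sub>R fund i)"
    by (rule sum.cong[OF refl]) (metis cf_int[OF x] floor_int lessThan_iff)
  then show "\<exists>c :: nat \<Rightarrow> int. x = (\<Sum>i<8. of_int (c i) *\<^sub>R fund i)"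
    using decomp[OF V] by metis
next
  assume "\<exists>c :: nat \<Rightarrow> int. x = (\<Sum>i<8. of_int (c i) *\<^sub>R fund i)"
  then obtain c :: "nat \<Rightarrow> int" where x: "x = (\<Sum>i<8. of_int (c i) *\<^sub>R fund i)" by blast
  show "x \<in> Lambda_BZ"
    unfolding Lambda_BZ_def mem_Collect_eq forall_9 x comb_nth
    by (intro conjI comb_in_V Ints_add Ints_of_int)
qed

lemma tri_iff: "x \<in> BZ_triangles \<longleftrightarrow>
   (\<exists>c :: nat \<Rightarrow> int. (\<forall>i<8. 0 \<le> c i) \<and> x = (\<Sum>i<8. of_int (c i) *\<^sub>R fund i))"
proof
  assume x: "x \<in> BZ_triangles"
  then have L: "x \<in> Lambda_BZ" and C: "x \<in> C_BZ" by (auto simp: BZ_triangles_def Lambda_BZ_def C_BZ_def)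
  then have V: "x \<in> V_BZ" by (simp add: Lambda_BZ_def)
  have "(\<Sum>i<8. of_int \<lfloor>cf x i\<rfloor> *\<^sub>R fund i) = (\<Sum>i<8. cf x i *\<^sub>R fund i)"
    by (rule sum.cong[OF refl]) (metis cf_int[OF L] floor_int lessThan_iff)
  moreover have "\<forall>i<8. 0 \<le> \<lfloor>cf x i\<rfloor>" using cf_nonneg[OF C] by simp
  ultimately show "\<exists>c :: nat \<Rightarrow> int. (\<forall>i<8. 0 \<le> c i) \<and> x = (\<Sum>i<8. of_int (c i) *\<^sub>R fund i)"
    using decomp[OF V] by metis
next
  assume "\<exists>c :: nat \<Rightarrow> int. (\<forall>i<8. 0 \<le> c i) \<and> x = (\<Sum>i<8. of_int (c i) *\<^sub>R fund i)"
  then obtain c :: "nat \<Rightarrow> int" where c: "\<forall>i<8. 0 \<le> c i" and x: "x = (\<Sum>i<8. of_int (c i) *\<^sub>R fund i)" by blast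
  have "x \<in> Lambda_BZ" using x Lambda_iff by blast
  moreover have "\<forall>i. 0 \<le> x$i" using c unfolding all8 forall_9 x comb_nth
    by simp
  ultimately show "x \<in> BZ_triangles" by (simp add: BZ_triangles_def)
qed

lemma lin_rel: "(\<Sum>i<8. c i *\<^sub>R fund i) = 0 \<longleftrightarrow> (\<exists>t. \<forall>i<8. c i = t * rel_coeff i)"
proof
  assume "(\<Sum>i<8. c i *\<^sub>R fund i) = 0"
  then have h: "c 0 = 0" "c 1 = 0" "c 2 = 0" "c 3 + c 6 = 0" "c 5 + c 7 = 0" "c 4 + c 6 = 0"
     "c 3 + c 7 = 0" "c 5 + c 6 = 0" "c 4 + c 7 = 0"
    unfolding vec9_eq comb_nth by auto
  show "\<exists>t. \<forall>i<8. c i = t * rel_coeff i"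
    by (rule exI[of _ "c 3"]) (use h in \<open>simp add: all8 rel_simps\<close>)
next
  assume "\<exists>t. \<forall>i<8. c i = t * rel_coeff i"
  then obtain t where "\<forall>i<8. c i = t * rel_coeff i" by blast
  then show "(\<Sum>i<8. c i *\<^sub>R fund i) = 0"
    unfolding vec9_eq comb_nth all8 by (simp add: rel_simps)
qed

definition lead :: "nat \<Rightarrow> 9" where "lead i = [1,2,3,4,6,5,4,5] ! i"

lemma lead_simps: "lead 0 = 1" "lead 1 = 2" "lead (Suc 0) = 2" "lead 2 = 3" "lead 3 = 4" "lead 4 = 6"
  "lead 5 = 5" "lead 6 = 4" "lead 7 = 5"
  by (simp_all add: lead_def eval_nat_numeral)

lemma lead_one: "i < 8 \<Longrightarrow> fund i $ lead i = 1"
  unfolding less8 by (elim disjE) (simp_all add: lead_simps fund_simps vdefs axis_nth9)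

lemma fund_nz: "i < 8 \<Longrightarrow> fund i \<noteq> 0"
  using lead_one by force

lemma fund_C: "i < 8 \<Longrightarrow> fund i \<in> C_BZ"
  unfolding less8 C_BZ_def V_BZ_def mem_Collect_eq forall_9
  by (elim disjE) (simp_all add: fund_simps vdefs axis_nth9)

lemma fund_tri: "i < 8 \<Longrightarrow> fund i \<in> BZ_triangles"
  unfolding less8 BZ_triangles_def Lambda_BZ_def V_BZ_def mem_Collect_eq forall_9
  by (elim disjE) (simp_all add: fund_simps vdefs axis_nth9)

lemma fund_Lambda: "i < 8 \<Longrightarrow> fund i \<in> Lambda_BZ"
  using fund_tri by (simp add: BZ_triangles_def)

lemma zp: assumes "a \<in> C_BZ" "i < 8" "\<forall>k. fund i $ k = 0 \<longrightarrow> a $ k = 0"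
  shows "a = a $ lead i *\<^sub>R fund i"
  using assms unfolding less8 C_BZ_def V_BZ_def mem_Collect_eq forall_9 vec9_eq
  by (elim disjE) (simp_all add: lead_simps fund_simps vdefs axis_nth9)

lemma C_add: "x \<in> C_BZ \<Longrightarrow> y \<in> C_BZ \<Longrightarrow> x + y \<in> C_BZ"
  unfolding C_BZ_def V_BZ_def by auto

lemma C_scale: "0 \<le> t \<Longrightarrow> x \<in> C_BZ \<Longrightarrow> t *\<^sub>R x \<in> C_BZ"
  unfolding C_BZ_def V_BZ_def by (auto simp: right_diff_distrib[symmetric])

lemma comb_C: assumes "\<forall>i<8. 0 \<le> c i" shows "(\<Sum>i<8. c i *\<^sub>R fund i) \<in> C_BZ"
  using assms unfolding C_BZ_def mem_Collect_eq forall_9 comb_nth all8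
  by (intro conjI comb_in_V) auto

lemma comb_upd: fixes g :: "nat \<Rightarrow> 'a::real_vector" and d :: "nat \<Rightarrow> real"
  assumes "j < (8::nat)"
  shows "(\<Sum>i<8. (d(j := e)) i *\<^sub>R g i) = (\<Sum>i<8. d i *\<^sub>R g i) + (e - d j) *\<^sub>R g j"
proof -
  have *: "e *\<^sub>R g j = d j *\<^sub>R g j + (e - d j) *\<^sub>R g j"
    by (simp add: scaleR_diff_left)
  have "(\<Sum>i<8. (d(j := e)) i *\<^sub>R g i) = (\<Sum>i<8. d i *\<^sub>R g i + (if i = j then (e - d j) *\<^sub>R g j else 0))"
  proof (intro sum.cong refl)
    fix i assume "i \<in> {..<8::nat}"
    show "(d(j := e)) i *\<^sub>R g i = d i *\<^sub>R g i + (if i = j then (e - d j) *\<^sub>R g j else 0)"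
    proof (cases "i = j")
      case True
      then show ?thesis using * by simp
    qed simp
  qed
  also have "\<dots> = (\<Sum>i<8. d i *\<^sub>R g i) + (e - d j) *\<^sub>R g j"
    using assms by (simp add: sum.distrib)
  finally show ?thesis .
qed

lemma ray_convex: "convex (ray v)"
  unfolding convex_def ray_def
proof (clarify)
  fix t s u w :: real
  assume "0 \<le> t" "0 \<le> s" "0 \<le> u" "0 \<le> w" "u + w = 1"
  then show "\<exists>r. u *\<^sub>R t *\<^sub>R v + w *\<^sub>R s *\<^sub>R v = r *\<^sub>R v \<and> 0 \<le> r"
    by (intro exI[of _ "u * t + w * s"]) (auto simp: algebra_simps)
qed

lemma ray_self: "v \<in> ray v"
  unfolding ray_def by (auto intro: exI[of _ 1])

lemma ray_sub: "v \<in> C_BZ \<Longrightarrow> ray v \<subseteq> C_BZ"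
  unfolding ray_def by (auto intro: C_scale)

lemma ray_scale: assumes "0 < s" shows "ray (s *\<^sub>R w) = ray w"
proof
  show "ray (s *\<^sub>R w) \<subseteq> ray w" unfolding ray_def
  proof clarify
    fix t :: real assume "0 \<le> t"
    then show "\<exists>r. t *\<^sub>R s *\<^sub>R w = r *\<^sub>R w \<and> 0 \<le> r"
      using assms by (intro exI[of _ "t * s"]) auto
  qed
  show "ray w \<subseteq> ray (s *\<^sub>R w)" unfolding ray_def
  proof clarify
    fix t :: real assume "0 \<le> t"
    then show "\<exists>r. t *\<^sub>R w = r *\<^sub>R s *\<^sub>R w \<and> 0 \<le> r"
      using assms by (intro exI[of _ "t / s"]) auto
  qed
qed

lemma seg_zero:
  assumes "a \<in> C_BZ" "b \<in> C_BZ" "x \<in> open_segment a b" "x $ k = 0"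
  shows "a $ k = 0 \<and> b $ k = 0"
proof -
  obtain u where u: "0 < u" "u < 1" "x = (1 - u) *\<^sub>R a + u *\<^sub>R b"
    using assms(3) by (auto simp: in_segment)
  have a: "0 \<le> a $ k" "0 \<le> b $ k" using assms(1,2) by (auto simp: C_BZ_def)
  have "(1 - u) * a $ k + u * b $ k = 0" using u assms(4) by simp
  moreover have "0 \<le> (1 - u) * a $ k" "0 \<le> u * b $ k" using u a by auto
  ultimately have "(1 - u) * a $ k = 0" "u * b $ k = 0" by linarith+
  then show ?thesis using u by auto
qed

lemma fund_face: assumes i: "i < 8" shows "ray (fund i) face_of C_BZ"
  unfolding face_of_def
proof (intro conjI ray_convex ray_sub fund_C[OF i] ballI impI)
  fix a b x assume ab: "a \<in> C_BZ" "b \<in> C_BZ" and x: "x \<in> ray (fund i)" "x \<in> open_segment a b"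
  obtain t where t: "x = t *\<^sub>R fund i" using x(1) by (auto simp: ray_def)
  have z: "\<forall>k. fund i $ k = 0 \<longrightarrow> a $ k = 0 \<and> b $ k = 0"
    using seg_zero[OF ab x(2)] t by auto
  have "a = a $ lead i *\<^sub>R fund i" using zp[OF ab(1) i] z by auto
  moreover have "b = b $ lead i *\<^sub>R fund i" using zp[OF ab(2) i] z by auto
  moreover have "0 \<le> a $ lead i" "0 \<le> b $ lead i" using ab by (auto simp: C_BZ_def)
  ultimately show "a \<in> ray (fund i)" "b \<in> ray (fund i)" unfolding ray_def by blast+
qed

lemma fund_extreme: "i < 8 \<Longrightarrow> extreme_ray_of (ray (fund i)) C_BZ"
  unfolding extreme_ray_of_def using fund_face fund_nz by blast

lemma extreme_fund:
  assumes F: "ray v face_of C_BZ" and v0: "v \<noteq> 0"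
  shows "\<exists>j<8. ray v = ray (fund j)"
proof -
  have vC: "v \<in> C_BZ" using face_of_imp_subset[OF F] ray_self by blast
  then have vV: "v \<in> V_BZ" by (simp add: C_BZ_def)
  define c where "c = cf v"
  have vdec: "v = (\<Sum>i<8. c i *\<^sub>R fund i)" using decomp[OF vV] c_def by simp
  have cnn: "\<forall>i<8. 0 \<le> c i" using cf_nonneg[OF vC] c_def by simp
  have "\<exists>j<8. c j \<noteq> 0"
  proof (rule ccontr)
    assume "\<not> (\<exists>j<8. c j \<noteq> 0)"
    then have z: "\<forall>i\<in>{..<8}. c i *\<^sub>R fund i = 0" by auto
    have "v = 0" unfolding vdec by (rule sum.neutral) (rule z)
    then show False using v0 by simp
  qed
  then obtain j where j: "j < 8" "c j \<noteq> 0" by blast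
  have cj: "0 < c j" using cnn j by force
  define w where "w = (\<Sum>i<8. (c(j := 0)) i *\<^sub>R fund i)"
  have wC: "w \<in> C_BZ" unfolding w_def by (rule comb_C) (use cnn in auto)
  have "w = v + (0 - c j) *\<^sub>R fund j"
    unfolding w_def vdec by (rule comb_upd[OF j(1)])
  then have vw: "v = c j *\<^sub>R fund j + w" by simp
  define a where "a = (2 * c j) *\<^sub>R fund j"
  define b where "b = 2 *\<^sub>R w"
  have aC: "a \<in> C_BZ" unfolding a_def using cj fund_C[OF j(1)] by (intro C_scale) auto
  have bC: "b \<in> C_BZ" unfolding b_def using wC by (intro C_scale) auto
  have vab: "v = (1 - 1/2) *\<^sub>R a + (1/2) *\<^sub>R b" unfolding a_def b_def vw by (simp add: algebra_simps)
  have "\<exists>s>0. v = s *\<^sub>R fund j"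
  proof (cases "a = b")
    case True
    then have "v = a" using vab by (simp add: algebra_simps flip: scaleR_add_left)
    then show ?thesis unfolding a_def using cj by (intro exI[of _ "2 * c j"]) auto
  next
    case False
    then have "v \<in> open_segment a b" unfolding in_segment using vab
      by (intro conjI exI[of _ "1/2"]) auto
    then have "a \<in> ray v" using F aC bC ray_self unfolding face_of_def by blast
    then obtain t where t: "a = t *\<^sub>R v" "0 \<le> t" by (auto simp: ray_def)
    have "a \<noteq> 0" unfolding a_def using cj fund_nz[OF j(1)] by simp
    then have "t \<noteq> 0" using t by auto
    then have "v = (1/t) *\<^sub>R a" using t by simp
    then have "v = (2 * c j / t) *\<^sub>R fund j" unfolding a_def by simp
    moreover have "0 < 2 * c j / t" using cj t \<open>t \<noteq> 0\<close> by simp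
    ultimately show ?thesis by blast
  qed
  then obtain s where "0 < s" "v = s *\<^sub>R fund j" by blast
  then show ?thesis using ray_scale j(1) by blast
qed

lemma fund_mult_inj: "i < 8 \<Longrightarrow> j < 8 \<Longrightarrow> fund i = t *\<^sub>R fund j \<Longrightarrow> i = j"
  unfolding less8 vec9_eq
  by (elim disjE) (simp_all add: fund_simps vdefs axis_nth9)

lemma fund_inj: "i < 8 \<Longrightarrow> j < 8 \<Longrightarrow> fund i = fund j \<Longrightarrow> i = j"
  using fund_mult_inj[of i j 1] by simp

lemma part1: "{R. extreme_ray_of R C_BZ} = ray ` fund ` {..<8}"
proof
  show "{R. extreme_ray_of R C_BZ} \<subseteq> ray ` fund ` {..<8}"
  proof
    fix R assume "R \<in> {R. extreme_ray_of R C_BZ}"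
    then obtain v where "v \<noteq> 0" "R = ray v" "ray v face_of C_BZ"
      unfolding extreme_ray_of_def by auto
    then show "R \<in> ray ` fund ` {..<8}" using extreme_fund by blast
  qed
  show "ray ` fund ` {..<8} \<subseteq> {R. extreme_ray_of R C_BZ}"
    using fund_extreme by auto
qed

lemma part2: "card (ray ` fund ` {..<8}) = 8"
proof -
  have "inj_on (ray \<circ> fund) {..<8}"
  proof (rule inj_onI)
    fix i j assume ij: "i \<in> {..<8}" "j \<in> {..<8}" "(ray \<circ> fund) i = (ray \<circ> fund) j"
    then have "fund i \<in> ray (fund j)" using ray_self by (metis comp_apply)
    then obtain t where "fund i = t *\<^sub>R fund j" by (auto simp: ray_def)
    then show "i = j" using fund_mult_inj ij by auto
  qed
  from card_image[OF this] show ?thesis by (simp add: image_comp)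
qed

definition lc :: "real^9 \<Rightarrow> nat \<Rightarrow> real" where
  "lc x i = [x$1, x$2, x$3, x$7, x$9, x$5, x$4 - x$7, 0] ! i"

lemma lc_simps: "lc x 0 = x$1" "lc x 1 = x$2" "lc x (Suc 0) = x$2" "lc x 2 = x$3" "lc x 3 = x$7"
  "lc x 4 = x$9" "lc x 5 = x$5" "lc x 6 = x$4 - x$7" "lc x 7 = 0"
  by (simp_all add: lc_def eval_nat_numeral)

definition L :: "(nat \<Rightarrow> nat) \<Rightarrow> real^9 \<Rightarrow> real^9" where
  "L s x = (\<Sum>i<8. lc x i *\<^sub>R fund (s i))"

lemma lc_add: "i < 8 \<Longrightarrow> lc (x + y) i = lc x i + lc y i"
  unfolding less8 by (elim disjE) (simp_all add: lc_simps)

lemma lc_scale: "i < 8 \<Longrightarrow> lc (r *\<^sub>R x) i = r * lc x i"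
  unfolding less8 by (elim disjE) (simp_all add: lc_simps right_diff_distrib)

lemma L_linear: "linear (L s)"
proof (rule linearI)
  fix x y
  have "L s (x + y) = (\<Sum>i<8. lc x i *\<^sub>R fund (s i) + lc y i *\<^sub>R fund (s i))"
    unfolding L_def by (rule sum.cong) (auto simp: lc_add scaleR_add_left)
  then show "L s (x + y) = L s x + L s y" by (simp add: L_def sum.distrib)
next
  fix r x
  have "L s (r *\<^sub>R x) = (\<Sum>i<8. r *\<^sub>R (lc x i *\<^sub>R fund (s i)))"
    unfolding L_def by (rule sum.cong) (auto simp: lc_scale)
  then show "L s (r *\<^sub>R x) = r *\<^sub>R L s x" by (simp add: L_def scaleR_sum_right)
qed

lemma L_comb: "L s (\<Sum>i<(8::nat). c i *\<^sub>R g i) = (\<Sum>i<8. c i *\<^sub>R L s (g i))"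
proof -
  have "L s (\<Sum>i<(8::nat). c i *\<^sub>R g i) = (\<Sum>i<8. L s (c i *\<^sub>R g i))"
    by (rule linear_sum[OF L_linear])
  also have "\<dots> = (\<Sum>i<8. c i *\<^sub>R L s (g i))" by (simp add: linear_scale[OF L_linear])
  finally show ?thesis .
qed

lemma bp_perm: "s \<in> block_perms \<Longrightarrow> s permutes {..<8}"
  unfolding block_perms_def mem_Collect_eq by (elim conjE) assumption

lemma bp_img1: "s \<in> block_perms \<Longrightarrow> s ` {0,1,2} = {0,1,2}"
  unfolding block_perms_def mem_Collect_eq by (elim conjE) assumption
lemma bp_img2: "s \<in> block_perms \<Longrightarrow> s ` {3,4,5} = {3,4,5}"
  unfolding block_perms_def mem_Collect_eq by (elim conjE) assumption
lemma bp_img3: "s \<in> block_perms \<Longrightarrow> s ` {6,7} = {6,7}"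
  unfolding block_perms_def mem_Collect_eq by (elim conjE) assumption
lemmas bp_img = bp_img1 bp_img2 bp_img3

lemma bp_inj: "s \<in> block_perms \<Longrightarrow> inj s"
  using permutes_inj[OF bp_perm] .

lemma bp_lt: assumes "s \<in> block_perms" "i < 8" shows "s i < 8"
  using permutes_in_image[OF bp_perm[OF assms(1)], of i] assms(2) by simp

lemma DPQ: "D1 + D3 + D5 = P + Q"
  unfolding vec9_eq by (simp add: vdefs axis_nth9)

lemma bp_blk: assumes s: "s \<in> block_perms"
  shows "fund (s 3) + fund (s 4) + fund (s 5) = fund (s 6) + fund (s 7)"
proof -
  have inj: "inj s" using bp_inj[OF s] .
  have i1: "inj_on s {3,4,5}" by (rule inj_on_subset[OF inj subset_UNIV])
  have i2: "inj_on s {6,7}" by (rule inj_on_subset[OF inj subset_UNIV])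
  note e1 = bp_img(2)[OF s] and e2 = bp_img(3)[OF s]
  have "fund (s 3) + fund (s 4) + fund (s 5) = sum (fund \<circ> s) {3,4,5}"
    by (simp add: add_ac)
  also have "\<dots> = sum fund (s ` {3,4,5})" by (rule sum.reindex[OF i1, symmetric])
  also have "\<dots> = D1 + D3 + D5" unfolding e1 by (simp add: fund_simps add_ac)
  also have "\<dots> = P + Q" by (rule DPQ)
  also have "\<dots> = sum fund (s ` {6,7})" unfolding e2 by (simp add: fund_simps)
  also have "\<dots> = sum (fund \<circ> s) {6,7}" by (rule sum.reindex[OF i2])
  also have "\<dots> = fund (s 6) + fund (s 7)" by simp
  finally show ?thesis .
qed

lemma L_fund: assumes s: "s \<in> block_perms" and i: "i < 8"
  shows "L s (fund i) = fund (s i)"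
proof -
  note b = bp_blk[OF s]
  have "i = 0 \<or> i = 1 \<or> i = 2 \<or> i = 3 \<or> i = 4 \<or> i = 5 \<or> i = 6 \<or> i = 7" using i less8 by blast
  then show ?thesis
  proof (elim disjE)
    assume "i = 7"
    then have "L s (fund i) = fund (s 3) + fund (s 4) + fund (s 5) - fund (s 6)"
      unfolding L_def sum8 by (simp add: lc_simps fund_simps vdefs axis_nth9)
    also have "\<dots> = fund (s 7)" using b by (simp add: algebra_simps)
    finally show ?thesis using \<open>i = 7\<close> by simp
  qed (simp_all add: L_def sum8 lc_simps fund_simps vdefs axis_nth9)
qed

lemma comb_perm: assumes "s permutes {..<8}"
  shows "(\<Sum>i<8. h i *\<^sub>R fund (s i)) = (\<Sum>j<8. h (inv s j) *\<^sub>R fund j)"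
proof -
  have "(\<Sum>j<8. h (inv s j) *\<^sub>R fund j) = (\<Sum>i<8. ((\<lambda>j. h (inv s j) *\<^sub>R fund j) \<circ> s) i)"
    by (rule sum.permute[OF assms])
  also have "\<dots> = (\<Sum>i<8. h i *\<^sub>R fund (s i))"
    by (simp add: permutes_inverses(2)[OF assms])
  finally show ?thesis by simp
qed


lemma bp_inv: assumes s: "s \<in> block_perms" shows "inv s \<in> block_perms"
proof -
  have p: "s permutes {..<8}" using bp_perm[OF s] .
  have inj: "inj s" using permutes_inj[OF p] .
  have ii: "inv s ` A = A" if "s ` A = A" for A
    using image_inv_f_f[OF inj, of A] that by simp
  have h: "s ` {0,1,2} = {0,1,2}" "s ` {3,4,5} = {3,4,5}" "s ` {6,7} = {6,7}"
    using bp_img[OF s] by blast+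
  show ?thesis unfolding block_perms_def mem_Collect_eq
    by (intro conjI permutes_inv[OF p] ii[OF h(1)] ii[OF h(2)] ii[OF h(3)])
qed

lemma L_on_comb: assumes s: "s \<in> block_perms"
  shows "L s (\<Sum>i<8. c i *\<^sub>R fund i) = (\<Sum>i<8. c i *\<^sub>R fund (s i))"
  unfolding L_comb by (rule sum.cong) (auto simp: L_fund[OF s])

lemma L_inv: assumes s: "s \<in> block_perms" and x: "x \<in> V_BZ"
  shows "L (inv s) (L s x) = x"
proof -
  have p: "s permutes {..<8}" using bp_perm[OF s] .
  have "L s x = (\<Sum>i<8. cf x i *\<^sub>R fund (s i))"
    using L_on_comb[OF s, of "cf x"] decomp[OF x] by simp
  then have "L (inv s) (L s x) = (\<Sum>i<8. cf x i *\<^sub>R L (inv s) (fund (s i)))"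
    by (simp add: L_comb)
  also have "\<dots> = (\<Sum>i<8. cf x i *\<^sub>R fund i)"
    by (rule sum.cong) (auto simp: L_fund[OF bp_inv[OF s]] bp_lt[OF s] permutes_inverses(2)[OF p])
  also have "\<dots> = x" using decomp[OF x] by simp
  finally show ?thesis .
qed

lemma L_Lambda: assumes s: "s \<in> block_perms" and x: "x \<in> Lambda_BZ"
  shows "L s x \<in> Lambda_BZ"
proof -
  have p: "s permutes {..<8}" using bp_perm[OF s] .
  obtain c :: "nat \<Rightarrow> int" where c: "x = (\<Sum>i<8. of_int (c i) *\<^sub>R fund i)"
    using x Lambda_iff by blast
  have "L s x = (\<Sum>i<8. of_int (c i) *\<^sub>R fund (s i))" using L_on_comb[OF s] c by simp
  also have "\<dots> = (\<Sum>j<8. of_int (c (inv s j)) *\<^sub>R fund j)"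
    by (rule comb_perm[OF p])
  finally have e: "L s x = (\<Sum>j<8. of_int (c (inv s j)) *\<^sub>R fund j)" .
  show ?thesis unfolding Lambda_iff using e by (intro exI[of _ "\<lambda>j. c (inv s j)"])
qed

lemma L_tri: assumes s: "s \<in> block_perms" and x: "x \<in> BZ_triangles"
  shows "L s x \<in> BZ_triangles"
proof -
  have p: "s permutes {..<8}" using bp_perm[OF s] .
  obtain c :: "nat \<Rightarrow> int" where c0: "\<forall>i<8. 0 \<le> c i" and c: "x = (\<Sum>i<8. of_int (c i) *\<^sub>R fund i)"
    using x tri_iff by blast
  have "L s x = (\<Sum>i<8. of_int (c i) *\<^sub>R fund (s i))" using L_on_comb[OF s] c by simp
  also have "\<dots> = (\<Sum>j<8. of_int (c (inv s j)) *\<^sub>R fund j)"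
    by (rule comb_perm[OF p])
  finally have e: "L s x = (\<Sum>j<8. of_int (c (inv s j)) *\<^sub>R fund j)" .
  have "\<forall>j<8. 0 \<le> c (inv s j)"
  proof (intro allI impI)
    fix j :: nat assume "j < 8"
    then have "inv s j < 8" using permutes_in_image[OF permutes_inv[OF p], of j] by simp
    then show "0 \<le> c (inv s j)" using c0 by simp
  qed
  then show ?thesis unfolding tri_iff using e by (intro exI[of _ "\<lambda>j. c (inv s j)"] conjI)
qed

lemma Lambda_V: "x \<in> Lambda_BZ \<Longrightarrow> x \<in> V_BZ"
  by (simp add: Lambda_BZ_def)

lemma tri_Lambda: "x \<in> BZ_triangles \<Longrightarrow> x \<in> Lambda_BZ"
  by (simp add: BZ_triangles_def)

lemma tri_C: "x \<in> BZ_triangles \<Longrightarrow> x \<in> C_BZ"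
  by (simp add: BZ_triangles_def Lambda_BZ_def C_BZ_def)

lemma Lambda_add: "x \<in> Lambda_BZ \<Longrightarrow> y \<in> Lambda_BZ \<Longrightarrow> x + y \<in> Lambda_BZ"
  unfolding Lambda_BZ_def V_BZ_def by auto

lemma Lambda_zero: "0 \<in> Lambda_BZ"
  unfolding Lambda_BZ_def V_BZ_def by auto

lemma Lambda_scale: "x \<in> Lambda_BZ \<Longrightarrow> of_int k *\<^sub>R x \<in> Lambda_BZ"
  unfolding Lambda_BZ_def V_BZ_def by (auto simp: right_diff_distrib[symmetric])

lemma Lambda_neg: "x \<in> Lambda_BZ \<Longrightarrow> - x \<in> Lambda_BZ"
  using Lambda_scale[of x "-1"] by simp

definition F :: "(nat \<Rightarrow> nat) \<Rightarrow> real^9 \<Rightarrow> real^9" where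
  "F s = restrict (L s) Lambda_BZ"

lemma F_app: "x \<in> Lambda_BZ \<Longrightarrow> F s x = L s x"
  by (simp add: F_def)

lemma F_G: assumes s: "s \<in> block_perms" shows "F s \<in> G_BZ"
proof -
  have si: "inv s \<in> block_perms" using bp_inv[OF s] .
  have p: "s permutes {..<8}" using bp_perm[OF s] .
  have ii: "inv (inv s) = s" using inv_inv_eq[OF permutes_bij[OF p]] .
  have bij: "bij_betw (F s) Lambda_BZ Lambda_BZ"
  proof (rule bij_betw_byWitness[where f' = "F (inv s)"])
    show "\<forall>a\<in>Lambda_BZ. F (inv s) (F s a) = a"
    proof
      fix a assume a: "a \<in> Lambda_BZ"
      have "F (inv s) (F s a) = L (inv s) (L s a)"
        using a L_Lambda[OF s a] by (simp add: F_app)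
      also have "\<dots> = a" using L_inv[OF s Lambda_V[OF a]] .
      finally show "F (inv s) (F s a) = a" .
    qed
    show "\<forall>a\<in>Lambda_BZ. F s (F (inv s) a) = a"
    proof
      fix a assume a: "a \<in> Lambda_BZ"
      have "F s (F (inv s) a) = L s (L (inv s) a)"
        using a L_Lambda[OF si a] by (simp add: F_app)
      also have "\<dots> = a" using L_inv[OF si Lambda_V[OF a]] ii by simp
      finally show "F s (F (inv s) a) = a" .
    qed
    show "F s ` Lambda_BZ \<subseteq> Lambda_BZ" using L_Lambda[OF s] by (auto simp: F_app)
    show "F (inv s) ` Lambda_BZ \<subseteq> Lambda_BZ" using L_Lambda[OF si] by (auto simp: F_app)
  qed
  have add: "\<forall>x\<in>Lambda_BZ. \<forall>y\<in>Lambda_BZ. F s (x + y) = F s x + F s y"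
    using Lambda_add by (simp add: F_app linear_add[OF L_linear])
  have "F s ` BZ_triangles = BZ_triangles"
  proof
    show "F s ` BZ_triangles \<subseteq> BZ_triangles"
      using L_tri[OF s] by (auto simp: F_app tri_Lambda)
    show "BZ_triangles \<subseteq> F s ` BZ_triangles"
    proof
      fix y assume y: "y \<in> BZ_triangles"
      have yt: "L (inv s) y \<in> BZ_triangles" using L_tri[OF si y] .
      have "y = L s (L (inv s) y)" using L_inv[OF si Lambda_V[OF tri_Lambda[OF y]]] ii by simp
      also have "\<dots> = F s (L (inv s) y)" using F_app[OF tri_Lambda[OF yt]] by simp
      finally show "y \<in> F s ` BZ_triangles" using yt by blast
    qed
  qed
  then show ?thesis using bij add by (simp add: G_BZ_def F_def)
qed

lemma F_fund: "s \<in> block_perms \<Longrightarrow> i < 8 \<Longrightarrow> F s (fund i) = fund (s i)"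
  by (simp add: F_app fund_Lambda L_fund)

lemma G_ext: "f \<in> G_BZ \<Longrightarrow> f \<in> extensional Lambda_BZ"
  unfolding G_BZ_def mem_Collect_eq by (elim conjE) assumption
lemma G_bij: "f \<in> G_BZ \<Longrightarrow> bij_betw f Lambda_BZ Lambda_BZ"
  unfolding G_BZ_def mem_Collect_eq by (elim conjE) assumption
lemma G_add: "f \<in> G_BZ \<Longrightarrow> x \<in> Lambda_BZ \<Longrightarrow> y \<in> Lambda_BZ \<Longrightarrow> f (x + y) = f x + f y"
  unfolding G_BZ_def mem_Collect_eq by (elim conjE) simp
lemma G_tri: "f \<in> G_BZ \<Longrightarrow> f ` BZ_triangles = BZ_triangles"
  unfolding G_BZ_def mem_Collect_eq by (elim conjE) assumption

lemma G_Lam: "f \<in> G_BZ \<Longrightarrow> x \<in> Lambda_BZ \<Longrightarrow> f x \<in> Lambda_BZ"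
  using G_bij bij_betwE by metis

lemma G_inj: "f \<in> G_BZ \<Longrightarrow> inj_on f Lambda_BZ"
  using G_bij bij_betw_imp_inj_on by metis

lemma G_zero: assumes "f \<in> G_BZ" shows "f 0 = 0"
proof -
  have "f (0 + 0) = f 0 + f 0" using G_add[OF assms Lambda_zero Lambda_zero] .
  then show ?thesis by simp
qed

lemma G_neg: assumes f: "f \<in> G_BZ" and x: "x \<in> Lambda_BZ" shows "f (- x) = - f x"
proof -
  have "f (x + - x) = f x + f (- x)" using G_add[OF f x Lambda_neg[OF x]] .
  then have h: "f (- x) + f x = 0" using G_zero[OF f] by (simp add: add.commute)
  show ?thesis by (subst eq_neg_iff_add_eq_0) (rule h)
qed

lemma Lambda_nat: "x \<in> Lambda_BZ \<Longrightarrow> real n *\<^sub>R x \<in> Lambda_BZ"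
  using Lambda_scale[of x "int n"] by simp

lemma G_nat: assumes f: "f \<in> G_BZ" and x: "x \<in> Lambda_BZ"
  shows "f (real n *\<^sub>R x) = real n *\<^sub>R f x"
proof (induction n)
  case 0
  then show ?case using G_zero[OF f] by simp
next
  case (Suc n)
  have "real (Suc n) *\<^sub>R x = real n *\<^sub>R x + x" by (simp add: algebra_simps)
  then have "f (real (Suc n) *\<^sub>R x) = f (real n *\<^sub>R x) + f x"
    using G_add[OF f Lambda_nat[OF x] x] by simp
  also have "\<dots> = real (Suc n) *\<^sub>R f x" using Suc by (simp add: algebra_simps)
  finally show ?case .
qed

lemma G_int: assumes f: "f \<in> G_BZ" and x: "x \<in> Lambda_BZ"
  shows "f (of_int k *\<^sub>R x) = of_int k *\<^sub>R f x"
proof (cases "0 \<le> k")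
  case True
  then have e: "(of_int k :: real) = real (nat k)" by simp
  show ?thesis unfolding e by (rule G_nat[OF f x])
next
  case False
  then have k: "(of_int k :: real) = - real (nat (- k))" by simp
  have "f (of_int k *\<^sub>R x) = f (- (real (nat (- k)) *\<^sub>R x))" unfolding k by (simp only: scaleR_minus_left)
  also have "\<dots> = - f (real (nat (- k)) *\<^sub>R x)" by (rule G_neg[OF f Lambda_nat[OF x]])
  also have "\<dots> = - (real (nat (- k)) *\<^sub>R f x)" by (simp only: G_nat[OF f x])
  also have "\<dots> = of_int k *\<^sub>R f x" unfolding k by (simp only: scaleR_minus_left)
  finally show ?thesis .
qed

lemma Lambda_sum: "finite A \<Longrightarrow> (\<forall>i\<in>A. v i \<in> Lambda_BZ) \<Longrightarrow>
    (\<Sum>i\<in>A. of_int (c i) *\<^sub>R v i) \<in> Lambda_BZ"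
proof (induction A rule: finite_induct)
  case empty
  then show ?case using Lambda_zero by simp
next
  case (insert a A)
  then show ?case using Lambda_add Lambda_scale by simp
qed

lemma G_sum: assumes f: "f \<in> G_BZ"
  shows "finite A \<Longrightarrow> (\<forall>i\<in>A. v i \<in> Lambda_BZ) \<Longrightarrow>
    f (\<Sum>i\<in>A. of_int (c i) *\<^sub>R v i) = (\<Sum>i\<in>A. of_int (c i) *\<^sub>R f (v i))"
proof (induction A rule: finite_induct)
  case empty
  then show ?case using G_zero[OF f] by simp
next
  case (insert a A)
  have va: "v a \<in> Lambda_BZ" using insert by simp
  have vA: "\<forall>i\<in>A. v i \<in> Lambda_BZ" using insert by simp
  have "f (\<Sum>i\<in>insert a A. of_int (c i) *\<^sub>R v i) = f (of_int (c a) *\<^sub>R v a + (\<Sum>i\<in>A. of_int (c i) *\<^sub>R v i))"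
    using insert by simp
  also have "\<dots> = f (of_int (c a) *\<^sub>R v a) + f (\<Sum>i\<in>A. of_int (c i) *\<^sub>R v i)"
    by (rule G_add[OF f Lambda_scale[OF va] Lambda_sum[OF insert(1) vA]])
  also have "\<dots> = of_int (c a) *\<^sub>R f (v a) + (\<Sum>i\<in>A. of_int (c i) *\<^sub>R f (v i))"
    using G_int[OF f va] insert.IH[OF vA] by simp
  also have "\<dots> = (\<Sum>i\<in>insert a A. of_int (c i) *\<^sub>R f (v i))" using insert by simp
  finally show ?case .
qed

lemma G_comb: assumes f: "f \<in> G_BZ"
  shows "f (\<Sum>i<8. of_int (c i) *\<^sub>R fund i) = (\<Sum>i<8. of_int (c i) *\<^sub>R f (fund i))"
  by (rule G_sum[OF f]) (auto intro: fund_Lambda)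

lemma G_unique: assumes f: "f \<in> G_BZ" and g: "g \<in> G_BZ" and e: "\<forall>i<8. f (fund i) = g (fund i)"
  shows "f = g"
proof (rule extensionalityI[OF G_ext[OF f] G_ext[OF g]])
  fix x assume "x \<in> Lambda_BZ"
  then obtain c :: "nat \<Rightarrow> int" where c: "x = (\<Sum>i<8. of_int (c i) *\<^sub>R fund i)"
    unfolding Lambda_iff by blast
  have "f x = (\<Sum>i<8. of_int (c i) *\<^sub>R f (fund i))" unfolding c by (rule G_comb[OF f])
  also have "\<dots> = (\<Sum>i<8. of_int (c i) *\<^sub>R g (fund i))" using e by simp
  also have "\<dots> = g x" unfolding c by (rule G_comb[OF g, symmetric])
  finally show "f x = g x" .
qed

definition indec :: "real^9 \<Rightarrow> bool" where
  "indec x \<longleftrightarrow> x \<in> BZ_triangles \<and> x \<noteq> 0 \<and>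
     (\<forall>a\<in>BZ_triangles. \<forall>b\<in>BZ_triangles. x = a + b \<longrightarrow> a = 0 \<or> b = 0)"

lemma fund_indec: assumes i: "i < 8" shows "indec (fund i)"
  unfolding indec_def
proof (intro conjI fund_tri[OF i] fund_nz[OF i] ballI impI)
  fix a b assume a: "a \<in> BZ_triangles" and b: "b \<in> BZ_triangles" and e: "fund i = a + b"
  have aC: "a \<in> C_BZ" and bC: "b \<in> C_BZ" using a b tri_C by auto
  have z: "\<forall>k. fund i $ k = 0 \<longrightarrow> a $ k = 0 \<and> b $ k = 0"
  proof (intro allI impI)
    fix k assume "fund i $ k = 0"
    then have "a $ k + b $ k = 0" using e by simp
    moreover have "0 \<le> a $ k" "0 \<le> b $ k" using aC bC by (auto simp: C_BZ_def)
    ultimately show "a $ k = 0 \<and> b $ k = 0" by linarith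
  qed
  have ea: "a = a $ lead i *\<^sub>R fund i" using zp[OF aC i] z by blast
  have eb: "b = b $ lead i *\<^sub>R fund i" using zp[OF bC i] z by blast
  have s1: "a $ lead i + b $ lead i = 1" using e lead_one[OF i] by (metis vector_add_component)
  have ia: "a $ lead i \<in> \<int>" and ib: "b $ lead i \<in> \<int>" using a b
    by (auto simp: BZ_triangles_def Lambda_BZ_def)
  have na: "0 \<le> a $ lead i" and nb: "0 \<le> b $ lead i" using aC bC by (auto simp: C_BZ_def)
  obtain m where m: "a $ lead i = of_int m" using ia Ints_cases by blast
  obtain n where n: "b $ lead i = of_int n" using ib Ints_cases by blast
  have "m + n = 1" "0 \<le> m" "0 \<le> n" using s1 na nb m n by simp_all
  then have "m = 0 \<or> n = 0" by linarith
  then have "a $ lead i = 0 \<or> b $ lead i = 0" using m n by auto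
  then show "a = 0 \<or> b = 0" using ea eb by (metis scale_zero_left)
qed

lemma indec_fund: assumes x: "indec x" shows "\<exists>j<8. x = fund j"
proof -
  have xt: "x \<in> BZ_triangles" and x0: "x \<noteq> 0"
    and xi: "\<forall>a\<in>BZ_triangles. \<forall>b\<in>BZ_triangles. x = a + b \<longrightarrow> a = 0 \<or> b = 0"
    using x unfolding indec_def by simp_all
  obtain c :: "nat \<Rightarrow> int" where c0: "\<forall>i<8. 0 \<le> c i" and c: "x = (\<Sum>i<8. of_int (c i) *\<^sub>R fund i)"
    using xt unfolding tri_iff by blast
  have "\<exists>j<8. c j \<noteq> 0"
  proof (rule ccontr)
    assume "\<not> (\<exists>j<8. c j \<noteq> 0)"
    then have z: "\<forall>i\<in>{..<8}. of_int (c i) *\<^sub>R fund i = (0::real^9)" by auto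
    have "x = 0" unfolding c by (rule sum.neutral) (rule z)
    then show False using x0 by simp
  qed
  then obtain j where j: "j < 8" "c j \<noteq> 0" by blast
  have cj: "1 \<le> c j" using j c0 by force
  define c' where "c' = c(j := c j - 1)"
  have c'0: "\<forall>i<8. 0 \<le> c' i" using c0 cj by (simp add: c'_def)
  have "(\<Sum>i<8. of_int (c' i) *\<^sub>R fund i) = (\<Sum>i<8. ((\<lambda>i. real_of_int (c i))(j := real_of_int (c j) - 1)) i *\<^sub>R fund i)"
    by (rule sum.cong) (simp_all add: c'_def)
  also have "\<dots> = (\<Sum>i<8. real_of_int (c i) *\<^sub>R fund i) + (real_of_int (c j) - 1 - real_of_int (c j)) *\<^sub>R fund j"
    by (rule comb_upd[OF j(1)])
  also have "\<dots> = x - fund j" using c by simp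
  finally have bx: "(\<Sum>i<8. of_int (c' i) *\<^sub>R fund i) = x - fund j" .
  define b where "b = x - fund j"
  have bt: "b \<in> BZ_triangles" unfolding b_def tri_iff using c'0 bx
    by (intro exI[of _ c'] conjI) auto
  have "x = fund j + b" unfolding b_def by simp
  then have "fund j = 0 \<or> b = 0" using xi fund_tri[OF j(1)] bt by blast
  then have "b = 0" using fund_nz[OF j(1)] by simp
  then show ?thesis unfolding b_def using j(1) by auto
qed

lemma G_indec: assumes f: "f \<in> G_BZ" and x: "indec x" shows "indec (f x)"
proof -
  have xt: "x \<in> BZ_triangles" and x0: "x \<noteq> 0"
    and xi: "\<forall>a\<in>BZ_triangles. \<forall>b\<in>BZ_triangles. x = a + b \<longrightarrow> a = 0 \<or> b = 0"
    using x unfolding indec_def by simp_all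
  have xL: "x \<in> Lambda_BZ" using tri_Lambda[OF xt] .
  have tr: "f ` BZ_triangles = BZ_triangles" using G_tri[OF f] .
  have inj: "inj_on f Lambda_BZ" using G_inj[OF f] .
  have ft: "f x \<in> BZ_triangles" using xt tr by blast
  have f0: "f x \<noteq> 0"
  proof
    assume "f x = 0"
    then have "f x = f 0" using G_zero[OF f] by simp
    then have "x = 0" using inj xL Lambda_zero by (simp add: inj_on_eq_iff)
    then show False using x0 by simp
  qed
  have "\<forall>a\<in>BZ_triangles. \<forall>b\<in>BZ_triangles. f x = a + b \<longrightarrow> a = 0 \<or> b = 0"
  proof (intro ballI impI)
    fix a b assume a: "a \<in> BZ_triangles" and b: "b \<in> BZ_triangles" and e: "f x = a + b"
    obtain a' where a': "a' \<in> BZ_triangles" "a = f a'" using a tr by blast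
    obtain b' where b': "b' \<in> BZ_triangles" "b = f b'" using b tr by blast
    have "f (a' + b') = f x"
      using e a' b' G_add[OF f tri_Lambda[OF a'(1)] tri_Lambda[OF b'(1)]] by simp
    then have "a' + b' = x"
      using inj xL Lambda_add[OF tri_Lambda[OF a'(1)] tri_Lambda[OF b'(1)]]
      by (simp add: inj_on_eq_iff)
    then have "a' = 0 \<or> b' = 0" using xi a'(1) b'(1) by blast
    then show "a = 0 \<or> b = 0" using a' b' G_zero[OF f] by auto
  qed
  then show ?thesis unfolding indec_def using ft f0 by simp
qed

lemma rel_range: "j < 8 \<Longrightarrow> (rel_coeff j = 0 \<and> j \<in> {0,1,2}) \<or> (rel_coeff j = 1 \<and> j \<in> {3,4,5})
     \<or> (rel_coeff j = -1 \<and> j \<in> {6,7})"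
  unfolding less8 by (elim disjE) (simp_all add: rel_simps)

lemma rel0: "j < 8 \<Longrightarrow> rel_coeff j = 0 \<Longrightarrow> j \<in> {0,1,2}"
  using rel_range[of j] by auto
lemma rel1: "j < 8 \<Longrightarrow> rel_coeff j = 1 \<Longrightarrow> j \<in> {3,4,5}"
  using rel_range[of j] by auto
lemma relm1: "j < 8 \<Longrightarrow> rel_coeff j = -1 \<Longrightarrow> j \<in> {6,7}"
  using rel_range[of j] by auto

lemma G_perm: assumes f: "f \<in> G_BZ"
  shows "\<exists>s\<in>block_perms. \<forall>i<8. f (fund i) = fund (s i)"
proof -
  have ex: "\<exists>j<8. f (fund i) = fund j" if "i < 8" for i
    using indec_fund[OF G_indec[OF f fund_indec[OF that]]] .
  define s where "s i = (if i < 8 then (SOME j. j < 8 \<and> f (fund i) = fund j) else i)" for i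
  have sp: "s i < 8 \<and> f (fund i) = fund (s i)" if "i < 8" for i
    using someI_ex[OF ex[OF that]] that by (simp add: s_def)
  have sout: "s i = i" if "i \<notin> {..<8}" for i using that by (simp add: s_def)
  have injf: "inj_on f Lambda_BZ" using G_inj[OF f] .
  have inj: "inj_on s {..<8}"
  proof (rule inj_onI)
    fix i i' assume i: "i \<in> {..<8}" and i': "i' \<in> {..<8}" and e: "s i = s i'"
    then have "f (fund i) = f (fund i')" using sp by simp
    then have "fund i = fund i'" using injf fund_Lambda i i' by (simp add: inj_on_eq_iff)
    then show "i = i'" using fund_inj i i' by simp
  qed
  have img: "s ` {..<8} = {..<8}"
    by (rule endo_inj_surj) (use sp inj in auto)
  have perm: "s permutes {..<8}"
    by (rule bij_imp_permutes[OF bij_betw_imageI[OF inj img]]) (rule sout)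
  have fs: "f (fund i) = fund (s i)" if "i < 8" for i using sp[OF that] by simp
  have L3: "D1 \<in> Lambda_BZ" "D3 \<in> Lambda_BZ" "D5 \<in> Lambda_BZ" "P \<in> Lambda_BZ" "Q \<in> Lambda_BZ"
    using fund_Lambda[of 3] fund_Lambda[of 4] fund_Lambda[of 5] fund_Lambda[of 6] fund_Lambda[of 7]
    by (simp_all add: fund_simps)
  have "f D1 + f D3 + f D5 = f (D1 + D3 + D5)"
    using G_add[OF f L3(1) L3(2)] G_add[OF f Lambda_add[OF L3(1) L3(2)] L3(3)] by simp
  also have "\<dots> = f (P + Q)" by (simp add: DPQ)
  also have "\<dots> = f P + f Q" by (rule G_add[OF f L3(4) L3(5)])
  finally have e1: "fund (s 3) + fund (s 4) + fund (s 5) = fund (s 6) + fund (s 7)"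
    using fs[of 3] fs[of 4] fs[of 5] fs[of 6] fs[of 7] by (simp add: fund_simps)
  have "(\<Sum>i<8. rel_coeff i *\<^sub>R fund (s i)) = (fund (s 3) + fund (s 4) + fund (s 5)) - (fund (s 6) + fund (s 7))"
    unfolding sum8 by (simp add: rel_simps algebra_simps)
  also have "\<dots> = 0" using e1 by simp
  finally have "(\<Sum>i<8. rel_coeff i *\<^sub>R fund (s i)) = 0" .
  then have "(\<Sum>j<8. rel_coeff (inv s j) *\<^sub>R fund j) = 0" using comb_perm[OF perm] by simp
  then have "\<exists>t. \<forall>j<8. rel_coeff (inv s j) = t * rel_coeff j" by (rule iffD1[OF lin_rel])
  then obtain t where t: "\<forall>j<8. rel_coeff (inv s j) = t * rel_coeff j" ..
  have rt: "rel_coeff i = t * rel_coeff (s i)" if "i < 8" for i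
  proof -
    have "rel_coeff (inv s (s i)) = t * rel_coeff (s i)" using t sp[OF that] by simp
    then show ?thesis by (simp add: permutes_inverses(2)[OF perm])
  qed
  have s3: "rel_coeff (s 3) = 1"
  proof -
    have h3: "1 = t * rel_coeff (s 3)" using rt[of 3] by (simp add: rel_simps)
    have h4: "1 = t * rel_coeff (s 4)" using rt[of 4] by (simp add: rel_simps)
    have h5: "1 = t * rel_coeff (s 5)" using rt[of 5] by (simp add: rel_simps)
    have l: "s 3 < 8" "s 4 < 8" "s 5 < 8" using sp[of 3] sp[of 4] sp[of 5] by simp_all
    have d: "s 3 \<noteq> s 4" "s 3 \<noteq> s 5" "s 4 \<noteq> s 5"
      using inj_onD[OF inj, of 3 4] inj_onD[OF inj, of 3 5] inj_onD[OF inj, of 4 5] by auto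
    show ?thesis
    proof (rule ccontr)
      assume ne: "rel_coeff (s 3) \<noteq> 1"
      have "rel_coeff (s 3) = -1" using rel_range[OF l(1)] h3 ne by auto
      then have tm: "t = -1" using h3 by simp
      have "rel_coeff (s 4) = -1" "rel_coeff (s 5) = -1" using h4 h5 tm by simp_all
      then have "s 3 \<in> {6,7}" "s 4 \<in> {6,7}" "s 5 \<in> {6,7}"
        using relm1 l \<open>rel_coeff (s 3) = -1\<close> by blast+
      then show False using d by auto
    qed
  qed
  have t1: "t = 1" using rt[of 3] s3 by (simp add: rel_simps)
  have rs: "rel_coeff (s i) = rel_coeff i" if "i < 8" for i using rt[OF that] t1 by simp
  have injS: "inj_on s S" if "S \<subseteq> {..<8}" for S using inj_on_subset[OF inj that] .
  have b1: "s ` {0,1,2} = {0,1,2}"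
  proof (rule endo_inj_surj)
    show "s ` {0,1,2} \<subseteq> {0,1,2}"
    proof
      fix y assume "y \<in> s ` {0,1,2}"
      then obtain i where i: "i \<in> {0,1,2}" "y = s i" by blast
      then have "i < 8" by auto
      have r: "rel_coeff i = 0" using i(1) by (auto simp: rel_simps)
      have "s i < 8" "rel_coeff (s i) = 0" using sp[OF \<open>i < 8\<close>] rs[OF \<open>i < 8\<close>] r by simp_all
      then show "y \<in> {0,1,2}" using rel0 i(2) by simp
    qed
    show "inj_on s {0,1,2}" by (rule injS) auto
  qed simp
  have b2: "s ` {3,4,5} = {3,4,5}"
  proof (rule endo_inj_surj)
    show "s ` {3,4,5} \<subseteq> {3,4,5}"
    proof
      fix y assume "y \<in> s ` {3,4,5}"
      then obtain i where i: "i \<in> {3,4,5}" "y = s i" by blast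
      then have "i < 8" by auto
      have r: "rel_coeff i = 1" using i(1) by (auto simp: rel_simps)
      have "s i < 8" "rel_coeff (s i) = 1" using sp[OF \<open>i < 8\<close>] rs[OF \<open>i < 8\<close>] r by simp_all
      then show "y \<in> {3,4,5}" using rel1 i(2) by simp
    qed
    show "inj_on s {3,4,5}" by (rule injS) auto
  qed simp
  have b3: "s ` {6,7} = {6,7}"
  proof (rule endo_inj_surj)
    show "s ` {6,7} \<subseteq> {6,7}"
    proof
      fix y assume "y \<in> s ` {6,7}"
      then obtain i where i: "i \<in> {6,7}" "y = s i" by blast
      then have "i < 8" by auto
      have r: "rel_coeff i = -1" using i(1) by (auto simp: rel_simps)
      have "s i < 8" "rel_coeff (s i) = -1" using sp[OF \<open>i < 8\<close>] rs[OF \<open>i < 8\<close>] r by simp_all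
      then show "y \<in> {6,7}" using relm1 i(2) by simp
    qed
    show "inj_on s {6,7}" by (rule injS) auto
  qed simp
  have "s \<in> block_perms" unfolding block_perms_def mem_Collect_eq
    by (intro conjI perm b1 b2 b3)
  then show ?thesis using fs by blast
qed

definition restr :: "(nat \<Rightarrow> nat) \<Rightarrow> nat set \<Rightarrow> nat \<Rightarrow> nat" where
  "restr s S = (\<lambda>i. if i \<in> S then s i else i)"

definition th :: "(nat \<Rightarrow> nat) \<times> (nat \<Rightarrow> nat) \<times> (nat \<Rightarrow> nat) \<Rightarrow> nat \<Rightarrow> nat" where
  "th x = fst x \<circ> fst (snd x) \<circ> snd (snd x)"

definition pr :: "(nat \<Rightarrow> nat) \<Rightarrow> (nat \<Rightarrow> nat) \<times> (nat \<Rightarrow> nat) \<times> (nat \<Rightarrow> nat)" where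
  "pr s = (restr s {0,1,2}, restr s {3,4,5}, restr s {6,7})"

definition PS :: "((nat \<Rightarrow> nat) \<times> (nat \<Rightarrow> nat) \<times> (nat \<Rightarrow> nat)) set" where
  "PS = {p. p permutes {0,1,2}} \<times> {p. p permutes {3,4,5}} \<times> {p. p permutes {6,7}}"

lemma perm_facts: assumes "p permutes S"
  shows "\<And>i. i \<notin> S \<Longrightarrow> p i = i" "\<And>i. i \<in> S \<Longrightarrow> p i \<in> S"
  using permutes_not_in[OF assms] permutes_in_image[OF assms] by auto

lemma restr_perm: assumes s: "s permutes {..<8}" and img: "s ` S = S" and S: "S \<subseteq> {..<8}"
  shows "restr s S permutes S"
proof (rule bij_imp_permutes)
  have "inj_on s S" using inj_on_subset[OF permutes_inj[OF s] subset_UNIV] .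
  then have "bij_betw s S S" using img by (rule bij_betw_imageI)
  then show "bij_betw (restr s S) S S"
    by (rule iffD1[OF bij_betw_cong, rotated]) (simp add: restr_def)
  show "restr s S x = x" if "x \<notin> S" for x using that by (simp add: restr_def)
qed

lemma card_bp: "card block_perms = 72"
proof -
  have bij: "bij_betw th PS block_perms"
  proof (rule bij_betw_byWitness[where f' = pr])
    show "\<forall>x\<in>PS. pr (th x) = x"
    proof
      fix x assume "x \<in> PS"
      then obtain a b c where x: "x = (a, b, c)" and a: "a permutes {0,1,2}"
        and b: "b permutes {3,4,5}" and c: "c permutes {6,7}"
        unfolding PS_def by auto
      note fa = perm_facts[OF a] and fb = perm_facts[OF b] and fc = perm_facts[OF c]
      have 1: "restr (a \<circ> b \<circ> c) {0,1,2} = a"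
      proof
        fix i show "restr (a \<circ> b \<circ> c) {0,1,2} i = a i"
        proof (cases "i \<in> {0,1,2}")
          case True
          then have "c i = i" "b i = i" using fb(1) fc(1) by auto
          then show ?thesis using True by (simp add: restr_def)
        next
          case False
          then show ?thesis using fa(1)[OF False] by (simp add: restr_def)
        qed
      qed
      have 2: "restr (a \<circ> b \<circ> c) {3,4,5} = b"
      proof
        fix i show "restr (a \<circ> b \<circ> c) {3,4,5} i = b i"
        proof (cases "i \<in> {3,4,5}")
          case True
          then have "c i = i" using fc(1) by auto
          moreover have "b i \<in> {3,4,5}" using fb(2)[OF True] .
          then have "a (b i) = b i" using fa(1) by auto
          ultimately show ?thesis using True by (simp add: restr_def)
        next
          case False
          then show ?thesis using fb(1)[OF False] by (simp add: restr_def)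
        qed
      qed
      have 3: "restr (a \<circ> b \<circ> c) {6,7} = c"
      proof
        fix i show "restr (a \<circ> b \<circ> c) {6,7} i = c i"
        proof (cases "i \<in> {6,7}")
          case True
          have ci: "c i \<in> {6,7}" using fc(2)[OF True] .
          then have "b (c i) = c i" using fb(1) by auto
          moreover have "a (c i) = c i" using ci fa(1) by auto
          ultimately show ?thesis using True by (simp add: restr_def)
        next
          case False
          then show ?thesis using fc(1)[OF False] by (simp add: restr_def)
        qed
      qed
      show "pr (th x) = x" unfolding x th_def pr_def using 1 2 3 by simp
    qed
    show "\<forall>s\<in>block_perms. th (pr s) = s"
    proof
      fix s assume s: "s \<in> block_perms"
      have p: "s permutes {..<8}" using bp_perm[OF s] .
      note i1 = bp_img1[OF s] and i2 = bp_img2[OF s] and i3 = bp_img3[OF s]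
      show "th (pr s) = s"
      proof
        fix i
        show "th (pr s) i = s i"
        proof (cases "i \<in> {0,1,2}")
          case True then show ?thesis by (auto simp: th_def pr_def restr_def)
        next
          case F1: False
          show ?thesis
          proof (cases "i \<in> {3,4,5}")
            case True
            then have "s i \<in> {3,4,5}" using i2 by blast
            then show ?thesis using True by (auto simp: th_def pr_def restr_def)
          next
            case F2: False
            show ?thesis
            proof (cases "i \<in> {6,7}")
              case True
              then have "s i \<in> {6,7}" using i3 by blast
              then show ?thesis using True by (auto simp: th_def pr_def restr_def)
            next
              case F3: False
              then have "i \<notin> {..<8}" using F1 F2 by auto
              then have "s i = i" using permutes_not_in[OF p] by simp
              then show ?thesis using F1 F2 F3 by (simp add: th_def pr_def restr_def)
            qed
          qed
        qed
      qed
    qed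
    show "th ` PS \<subseteq> block_perms"
    proof
      fix y assume "y \<in> th ` PS"
      then obtain a b c where y: "y = a \<circ> b \<circ> c" and a: "a permutes {0,1,2}"
        and b: "b permutes {3,4,5}" and c: "c permutes {6,7}"
        unfolding PS_def th_def by auto
      note fa = perm_facts[OF a] and fb = perm_facts[OF b] and fc = perm_facts[OF c]
      have pa: "a permutes {..<8}" by (rule permutes_subset[OF a]) auto
      have pb: "b permutes {..<8}" by (rule permutes_subset[OF b]) auto
      have pc: "c permutes {..<8}" by (rule permutes_subset[OF c]) auto
      have py: "y permutes {..<8}" unfolding y by (intro permutes_compose pa pb pc)
      have h: "c ` {0,1,2} = {0,1,2}" "b ` {0,1,2} = {0,1,2}" using fc(1) fb(1) by auto
      have "y ` {0,1,2} = a ` b ` c ` {0,1,2}" unfolding y by (simp only: image_comp o_assoc)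
      then have y1: "y ` {0,1,2} = {0,1,2}" using h permutes_image[OF a] by (simp only:)
      have h: "c ` {3,4,5} = {3,4,5}" "a ` {3,4,5} = {3,4,5}" using fc(1) fa(1) by auto
      have "y ` {3,4,5} = a ` b ` c ` {3,4,5}" unfolding y by (simp only: image_comp o_assoc)
      then have y2: "y ` {3,4,5} = {3,4,5}" using h permutes_image[OF b] by (simp only:)
      have h: "b ` {6,7} = {6,7}" "a ` {6,7} = {6,7}" using fb(1) fa(1) by auto
      have "y ` {6,7} = a ` b ` c ` {6,7}" unfolding y by (simp only: image_comp o_assoc)
      then have y3: "y ` {6,7} = {6,7}" using h permutes_image[OF c] by (simp only:)
      show "y \<in> block_perms" unfolding block_perms_def mem_Collect_eq
        by (intro conjI py y1 y2 y3)
    qed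
    show "pr ` block_perms \<subseteq> PS"
    proof
      fix y assume "y \<in> pr ` block_perms"
      then obtain s where y: "y = pr s" and s: "s \<in> block_perms" by blast
      have p: "s permutes {..<8}" using bp_perm[OF s] .
      have "restr s {0,1,2} permutes {0,1,2}" by (rule restr_perm[OF p bp_img1[OF s]]) auto
      moreover have "restr s {3,4,5} permutes {3,4,5}" by (rule restr_perm[OF p bp_img2[OF s]]) auto
      moreover have "restr s {6,7} permutes {6,7}" by (rule restr_perm[OF p bp_img3[OF s]]) auto
      ultimately show "y \<in> PS" unfolding y pr_def PS_def by simp
    qed
  qed
  have "card PS = 72"
    unfolding PS_def card_cartesian_product
    by (simp add: card_permutations eval_nat_numeral)
  then show ?thesis using bij_betw_same_card[OF bij] by simp
qed

lemma G_eq: "G_BZ = F ` block_perms"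
proof
  show "G_BZ \<subseteq> F ` block_perms"
  proof
    fix f assume f: "f \<in> G_BZ"
    obtain s where s: "s \<in> block_perms" and fs: "\<forall>i<8. f (fund i) = fund (s i)"
      using G_perm[OF f] by blast
    have "f = F s" by (rule G_unique[OF f F_G[OF s]]) (simp add: fs F_fund[OF s])
    then show "f \<in> F ` block_perms" using s by blast
  qed
  show "F ` block_perms \<subseteq> G_BZ" using F_G by blast
qed

lemma F_inj: "inj_on F block_perms"
proof (rule inj_onI)
  fix s t assume s: "s \<in> block_perms" and t: "t \<in> block_perms" and e: "F s = F t"
  show "s = t"
  proof
    fix i show "s i = t i"
    proof (cases "i < 8")
      case True
      have "fund (s i) = fund (t i)" using F_fund[OF s True] F_fund[OF t True] e by simp
      then show ?thesis using fund_inj bp_lt[OF s True] bp_lt[OF t True] by simp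
    next
      case False
      then have "i \<notin> {..<8}" by simp
      then show ?thesis using permutes_not_in[OF bp_perm[OF s]] permutes_not_in[OF bp_perm[OF t]] by simp
    qed
  qed
qed

lemma card_G: "card G_BZ = 72"
  unfolding G_eq using card_image[OF F_inj] card_bp by simp

theorem mainTheorem2:
  shows "{R. extreme_ray_of R C_BZ} = ray ` fund ` {..<8}
       \<and> card (ray ` fund ` {..<8}) = 8
       \<and> Lambda_BZ = {x. \<exists>c :: nat \<Rightarrow> int. x = (\<Sum>i<8. of_int (c i) *\<^sub>R fund i)}
       \<and> (\<forall>c :: nat \<Rightarrow> real. (\<Sum>i<8. c i *\<^sub>R fund i) = 0
              \<longleftrightarrow> (\<exists>t. \<forall>i<8. c i = t * rel_coeff i))
       \<and> card G_BZ = 72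
       \<and> (\<forall>f\<in>G_BZ. \<exists>\<sigma>\<in>block_perms. \<forall>i<8. f (fund i) = fund (\<sigma> i))
       \<and> (\<forall>\<sigma>\<in>block_perms. \<exists>!f. f \<in> G_BZ \<and> (\<forall>i<8. f (fund i) = fund (\<sigma> i)))"
proof (intro conjI)
  show "{R. extreme_ray_of R C_BZ} = ray ` fund ` {..<8}" by (rule part1)
  show "card (ray ` fund ` {..<8}) = 8" by (rule part2)
  show "Lambda_BZ = {x. \<exists>c :: nat \<Rightarrow> int. x = (\<Sum>i<8. of_int (c i) *\<^sub>R fund i)}"
    by (rule set_eqI) (simp only: Lambda_iff mem_Collect_eq)
  show "\<forall>c :: nat \<Rightarrow> real. (\<Sum>i<8. c i *\<^sub>R fund i) = 0 \<longleftrightarrow> (\<exists>t. \<forall>i<8. c i = t * rel_coeff i)"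
    using lin_rel by blast
  show "card G_BZ = 72" by (rule card_G)
  show "\<forall>f\<in>G_BZ. \<exists>\<sigma>\<in>block_perms. \<forall>i<8. f (fund i) = fund (\<sigma> i)"
    using G_perm by blast
  show "\<forall>\<sigma>\<in>block_perms. \<exists>!f. f \<in> G_BZ \<and> (\<forall>i<8. f (fund i) = fund (\<sigma> i))"
  proof
    fix s assume s: "s \<in> block_perms"
    show "\<exists>!f. f \<in> G_BZ \<and> (\<forall>i<8. f (fund i) = fund (s i))"
    proof (rule ex1I[of _ "F s"])
      show "F s \<in> G_BZ \<and> (\<forall>i<8. F s (fund i) = fund (s i))"
        using F_G[OF s] F_fund[OF s] by simp
      fix g assume g: "g \<in> G_BZ \<and> (\<forall>i<8. g (fund i) = fund (s i))"
      show "g = F s" using g by (intro G_unique[OF _ F_G[OF s]]) (simp_all add: F_fund[OF s])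
    qed
  qed
qed

end
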